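(* Let $\mathfrak g$ be simple, $\alpha\in\Pi\cap\Delta_s$ a short simple root, and $\lambda\in\mathfrak X_+\cap Q$. Let $\alpha^+=\theta_s$ denote the unique dominant element of $W\alpha$. Then $q\,\mathfrak m_\lambda^\alpha(q)=q^{\mathrm{ht}(\alpha^+)}\,\mathfrak m_\lambda^{\alpha^+}(q)$, and consequently $\mathfrak m_\lambda^0(q)-q^{\mathrm{ht}(\alpha^+)}\mathfrak m_\lambda^{\alpha^+}(q)=\mathfrak m_\lambda^0(q)-q\,\mathfrak m_\lambda^{\alpha}(q)=q\,\mathfrak m_\lambda^0(q)-\mathfrak m_\lambda^{-\alpha}(q)$.
   Context: Let $\mathfrak g$ be a semisimple Lie algebra over an algebraically closed field of characteristic zero, with Cartan subalgebra $\mathfrak t$, root system $\Delta$, positive roots $\Delta^+$, simple roots $\Pi=\{\alpha_1,\dots,\alpha_r\}$, $\rho=\frac12\sum_{\gamma\in\Delta^+}\gamma$, integral weight lattice $\mathfrak X$, dominant weights $\mathfrak X_+$, root lattice $Q$, and $Q_+$ the monoid generated by $\Pi$. The Weyl group is $W$, with length function $\ell$ and sign $\varepsilon(w)=(-1)^{\ell(w)}$. For $\gamma=\sum_i c_i\alpha_i\in Q$, $\mathrm{ht}(\gamma)=\sum_i c_i$. Define polynomials $\mathcal P_q(\mu)\in\mathbb Z[q]$ by $\prod_{\alpha\in\Delta^+}(1-qe^{\alpha})^{-1}=\sum_{\mu\in Q_+}\mathcal P_q(\mu)e^\mu$, and $\mathcal P_q(\mu)=0$ for $\mu\notin Q_+$.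 For $\lambda\in\mathfrak X_+$ and any $\mu\in\mathfrak X$, Lusztig's $q$-analogue of weight multiplicity is $\mathfrak m_\lambda^\mu(q)=\sum_{w\in W}\varepsilon(w)\mathcal P_q(w(\lambda+\rho)-(\mu+\rho))$. $\Delta_s$ is the set of short roots (all roots if $\mathfrak g$ is simply-laced) and $\theta_s$ the dominant short root. *)

theory Defs
  imports "HOL-Analysis.Analysis" "HOL-Computational_Algebra.Polynomial"
begin

text \<open>Root-system data of a semisimple Lie algebra, realised in a real Euclidean
  space (the real form of the dual of the Cartan subalgebra).\<close>

definition refl :: "'a::euclidean_space \<Rightarrow> 'a \<Rightarrow> 'a" where
  "refl a x = x - (2 * (x \<bullet> a) / (a \<bullet> a)) *\<^sub>R a"

definition root_system :: "'a::euclidean_space set \<Rightarrow> bool" where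
  "root_system R \<longleftrightarrow> finite R \<and> 0 \<notin> R \<and> span R = UNIV
     \<and> (\<forall>a\<in>R. refl a ` R = R)
     \<and> (\<forall>a\<in>R. \<forall>b\<in>R. 2 * (b \<bullet> a) / (a \<bullet> a) \<in> \<int>)
     \<and> (\<forall>a\<in>R. \<forall>c::real. c *\<^sub>R a \<in> R \<longrightarrow> c = 1 \<or> c = -1)"

text \<open>Irreducible root system (= root system of a simple Lie algebra).\<close>
definition irreducible_rs :: "'a::euclidean_space set \<Rightarrow> bool" where
  "irreducible_rs R \<longleftrightarrow> R \<noteq> {} \<and>
     \<not> (\<exists>R1 R2. R1 \<noteq> {} \<and> R2 \<noteq> {} \<and> R1 \<union> R2 = R \<and> R1 \<inter> R2 = {}
            \<and> (\<forall>a\<in>R1. \<forall>b\<in>R2. a \<bullet> b = 0))"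

definition is_base :: "'a::euclidean_space set \<Rightarrow> 'a set \<Rightarrow> bool" where
  "is_base R S \<longleftrightarrow> S \<subseteq> R \<and> independent S \<and>
     (\<forall>b\<in>R. \<exists>c::'a \<Rightarrow> int. b = (\<Sum>s\<in>S. of_int (c s) *\<^sub>R s)
        \<and> ((\<forall>s\<in>S. c s \<ge> 0) \<or> (\<forall>s\<in>S. c s \<le> 0)))"

definition Qplus :: "'a::euclidean_space set \<Rightarrow> 'a set" where
  "Qplus S = {\<Sum>s\<in>S. of_nat (c s) *\<^sub>R s | c :: 'a \<Rightarrow> nat. True}"

definition pos_roots :: "'a::euclidean_space set \<Rightarrow> 'a set \<Rightarrow> 'a set" where
  "pos_roots R S = R \<inter> Qplus S"

definition root_lattice :: "'a::euclidean_space set \<Rightarrow> 'a set" where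
  "root_lattice R = {\<Sum>b\<in>R. of_int (c b) *\<^sub>R b | c :: 'a \<Rightarrow> int. True}"

definition ht :: "'a::euclidean_space set \<Rightarrow> 'a \<Rightarrow> int" where
  "ht S \<gamma> = (THE n. \<exists>c :: 'a \<Rightarrow> int. \<gamma> = (\<Sum>s\<in>S. of_int (c s) *\<^sub>R s) \<and> n = (\<Sum>s\<in>S. c s))"

definition weights :: "'a::euclidean_space set \<Rightarrow> 'a set" where
  "weights R = {x. \<forall>b\<in>R. 2 * (x \<bullet> b) / (b \<bullet> b) \<in> \<int>}"

definition dominant :: "'a::euclidean_space set \<Rightarrow> 'a set \<Rightarrow> 'a set" where
  "dominant R S = {x \<in> weights R. \<forall>s\<in>S. x \<bullet> s \<ge> 0}"

definition rho :: "'a::euclidean_space set \<Rightarrow> 'a set \<Rightarrow> 'a" where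
  "rho R S = (1/2) *\<^sub>R (\<Sum>b\<in>pos_roots R S. b)"

inductive_set weyl :: "'a::euclidean_space set \<Rightarrow> ('a \<Rightarrow> 'a) set" for R where
  weyl_id: "id \<in> weyl R"
| weyl_step: "w \<in> weyl R \<Longrightarrow> a \<in> R \<Longrightarrow> refl a \<circ> w \<in> weyl R"

definition wlen :: "'a::euclidean_space set \<Rightarrow> ('a \<Rightarrow> 'a) \<Rightarrow> nat" where
  "wlen S w = (LEAST n. \<exists>xs. set xs \<subseteq> S \<and> length xs = n \<and> w = foldr (\<lambda>a f. refl a \<circ> f) xs id)"

definition wsign :: "'a::euclidean_space set \<Rightarrow> ('a \<Rightarrow> 'a) \<Rightarrow> int" where
  "wsign S w = (-1) ^ wlen S w"

text \<open>Kostant q-partition function: coefficient of e^mu in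
  prod_{alpha>0} (1 - q e^alpha)^{-1}, i.e. the sum of q^(sum f) over all ways
  f of writing mu as a nonnegative integer combination of positive roots
  (zero if mu is not in Q_+).\<close>
definition Pq :: "'a::euclidean_space set \<Rightarrow> 'a set \<Rightarrow> 'a \<Rightarrow> int poly" where
  "Pq R S \<mu> = (\<Sum>f \<in> {f :: 'a \<Rightarrow> nat. (\<forall>b. b \<notin> pos_roots R S \<longrightarrow> f b = 0)
                      \<and> (\<Sum>b\<in>pos_roots R S. of_nat (f b) *\<^sub>R b) = \<mu>}.
                monom 1 (\<Sum>b\<in>pos_roots R S. f b))"

definition mq :: "'a::euclidean_space set \<Rightarrow> 'a set \<Rightarrow> 'a \<Rightarrow> 'a \<Rightarrow> int poly" where
  "mq R S lam \<mu> = (\<Sum>w\<in>weyl R. of_int (wsign S w) *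
                    Pq R S (w (lam + rho R S) - (\<mu> + rho R S)))"

definition short_roots :: "'a::euclidean_space set \<Rightarrow> 'a set" where
  "short_roots R = {b\<in>R. \<forall>c\<in>R. b \<bullet> b \<le> c \<bullet> c}"

end

theory Submission
  imports Defs
begin


lemma refl_add: "refl a (x + y) = refl a x + refl a y"
  unfolding refl_def by (simp add: inner_add_left add_divide_distrib scaleR_add_left algebra_simps)
lemma refl_scale: "refl a (c *\<^sub>R x) = c *\<^sub>R refl a x"
  unfolding refl_def by (simp add: inner_scaleR_left algebra_simps)
lemma refl_linear: "linear (refl a)"
  by (intro linearI refl_add refl_scale)
lemma refl_neg: "refl a (- x) = - refl a x"
  using refl_scale[of a "-1" x] by simp
lemma refl_diff: "refl a (x - y) = refl a x - refl a y"
  using refl_add[of a x "-y"] refl_neg[of a y] by simp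
lemma refl_zero: "refl a 0 = 0" unfolding refl_def by simp
lemma refl_refl: "a \<noteq> 0 \<Longrightarrow> refl a (refl a x) = x"
  unfolding refl_def by (simp add: inner_diff_left inner_scaleR_left algebra_simps)
lemma refl_self: "a \<noteq> 0 \<Longrightarrow> refl a a = - a"
  unfolding refl_def by (simp add: algebra_simps scaleR_2)
lemma refl_inner: "a \<noteq> 0 \<Longrightarrow> refl a x \<bullet> refl a y = x \<bullet> y"
proof -
  assume a: "a \<noteq> 0"
  have aa: "a \<bullet> a \<noteq> 0" using a by simp
  have c: "a \<bullet> y = y \<bullet> a" "a \<bullet> x = x \<bullet> a" by (simp_all add: inner_commute)
  show ?thesis unfolding refl_def
    apply (simp only: inner_diff_left inner_diff_right inner_scaleR_left inner_scaleR_right c)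
    using aa by (simp add: field_simps)
qed
lemma refl_negroot: "refl (- a) = refl a"
  unfolding refl_def by (rule ext) simp
lemma refl_orth: "x \<bullet> a = 0 \<Longrightarrow> refl a x = x"
  unfolding refl_def by simp
lemma refl_sum: "refl a (sum f A) = (\<Sum>x\<in>A. refl a (f x))"
  using linear_sum[OF refl_linear] by simp

locale RS =
  fixes R S :: "'a::euclidean_space set"
  assumes rs: "root_system R" and base: "is_base R S"
begin

lemma rs_facts: "finite R" "0 \<notin> R" "span R = UNIV" "\<forall>a\<in>R. refl a ` R = R"
  "\<forall>a\<in>R. \<forall>b\<in>R. 2 * (b \<bullet> a) / (a \<bullet> a) \<in> \<int>"
  "\<forall>a\<in>R. \<forall>c::real. c *\<^sub>R a \<in> R \<longrightarrow> c = 1 \<or> c = -1"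
  using rs unfolding root_system_def by simp_all
lemma base_facts: "S \<subseteq> R" "independent S"
  "\<forall>b\<in>R. \<exists>c::'a \<Rightarrow> int. b = (\<Sum>s\<in>S. of_int (c s) *\<^sub>R s)
        \<and> ((\<forall>s\<in>S. c s \<ge> 0) \<or> (\<forall>s\<in>S. c s \<le> 0))"
  using base unfolding is_base_def by simp_all
lemma finR: "finite R" by (rule rs_facts)
lemma zeroR: "0 \<notin> R" by (rule rs_facts)
lemma spanR: "span R = UNIV" by (rule rs_facts)
lemma reflR: "a \<in> R \<Longrightarrow> refl a ` R = R" using rs_facts(4) by (rule bspec)
lemma refl_mem: "a \<in> R \<Longrightarrow> b \<in> R \<Longrightarrow> refl a b \<in> R" using reflR by (metis imageI)
lemma cartan_int: "a \<in> R \<Longrightarrow> b \<in> R \<Longrightarrow> 2 * (b \<bullet> a) / (a \<bullet> a) \<in> \<int>"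
  using rs_facts(5) by simp
lemma reduced: "a \<in> R \<Longrightarrow> c *\<^sub>R a \<in> R \<Longrightarrow> c = 1 \<or> c = -1"
  using rs_facts(6) by simp
lemma nonzero: "a \<in> R \<Longrightarrow> a \<noteq> 0" using zeroR by metis
lemma neg_mem: "a \<in> R \<Longrightarrow> - a \<in> R"
  using refl_mem[of a a] refl_self[of a] nonzero by metis
lemma SR: "S \<subseteq> R" by (rule base_facts)
lemma indS: "independent S" by (rule base_facts)
lemma finS: "finite S" using indS finiteI_independent by metis
lemma root_comb: "b \<in> R \<Longrightarrow> \<exists>c::'a \<Rightarrow> int. b = (\<Sum>s\<in>S. of_int (c s) *\<^sub>R s)
        \<and> ((\<forall>s\<in>S. c s \<ge> 0) \<or> (\<forall>s\<in>S. c s \<le> 0))"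
  using base_facts(3) by (rule bspec)
lemma R_span: "R \<subseteq> span S"
proof
  fix b assume "b \<in> R"
  then obtain c::"'a\<Rightarrow>int" where "b = (\<Sum>s\<in>S. of_int (c s) *\<^sub>R s)" using root_comb by blast
  then show "b \<in> span S" by (auto intro: span_sum span_scale span_base)
qed
lemma spanS: "span S = UNIV"
  proof -
  have "UNIV \<subseteq> span S" using span_mono[OF R_span] spanR by (simp add: span_span)
  then show ?thesis by auto
qed

definition co :: "'a \<Rightarrow> 'a \<Rightarrow> real" where "co x = representation S x"

lemma co_sum_eq: "(\<Sum>s\<in>S. co x s *\<^sub>R s) = x"
  unfolding co_def using sum_representation_eq[OF indS _ finS] spanS by auto

lemma comb_unique:
  assumes "(\<Sum>s\<in>S. c s *\<^sub>R s) = (\<Sum>s\<in>S. d s *\<^sub>R s)" "s \<in> S"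
  shows "c s = d s"
proof (rule ccontr)
  assume ne: "c s \<noteq> d s"
  have "(\<Sum>t\<in>S. (c t - d t) *\<^sub>R t) = 0"
    using assms(1) by (simp add: scaleR_diff_left sum_subtractf)
  then have "dependent S" unfolding dependent_finite[OF finS] using ne assms(2)
    by (intro exI[of _ "\<lambda>t. c t - d t"]) auto
  then show False using indS by simp
qed

lemma co_unique: "(\<Sum>s\<in>S. c s *\<^sub>R s) = x \<Longrightarrow> s \<in> S \<Longrightarrow> co x s = c s"
  using comb_unique[of "co x" c] co_sum_eq[of x] by auto

lemma co_add: "s \<in> S \<Longrightarrow> co (x + y) s = co x s + co y s"
  by (rule co_unique) (simp add: scaleR_add_left sum.distrib co_sum_eq)
lemma co_scale: "s \<in> S \<Longrightarrow> co (c *\<^sub>R x) s = c * co x s"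
proof (rule co_unique)
  show "(\<Sum>s\<in>S. (c * co x s) *\<^sub>R s) = c *\<^sub>R x"
    proof -
    have "(\<Sum>s\<in>S. (c * co x s) *\<^sub>R s) = (\<Sum>s\<in>S. c *\<^sub>R (co x s *\<^sub>R s))" by simp
    also have "\<dots> = c *\<^sub>R (\<Sum>s\<in>S. co x s *\<^sub>R s)" by (rule scaleR_sum_right[symmetric])
    finally show ?thesis using co_sum_eq[of x] by simp
  qed
qed
lemma co_neg: "s \<in> S \<Longrightarrow> co (- x) s = - co x s"
  using co_scale[of s "-1" x] by simp
lemma co_diff: "s \<in> S \<Longrightarrow> co (x - y) s = co x s - co y s"
  using co_add[of s x "-y"] co_neg[of s y] by simp
lemma co_basis: "t \<in> S \<Longrightarrow> s \<in> S \<Longrightarrow> co t s = (if s = t then 1 else 0)"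
  by (rule co_unique) (simp_all add: if_distrib[of "\<lambda>c. c *\<^sub>R _"] sum.delta finS cong: if_cong)
lemma co_zero: "s \<in> S \<Longrightarrow> co 0 s = 0"
  using co_scale[of s 0 0] by simp
lemma co_sumf: "s \<in> S \<Longrightarrow> co (sum f A) s = (\<Sum>x\<in>A. co (f x) s)"
  by (induction A rule: infinite_finite_induct) (auto simp: co_zero co_add)

lemma eq_by_co: "(\<And>s. s \<in> S \<Longrightarrow> co x s = co y s) \<Longrightarrow> x = y"
  using co_sum_eq[of x] co_sum_eq[of y] by (metis (no_types, lifting) sum.cong)

end

context RS begin

abbreviation "P \<equiv> pos_roots R S"

lemma co_int: "b \<in> R \<Longrightarrow> s \<in> S \<Longrightarrow> co b s \<in> \<int>"
proof -
  assume b: "b \<in> R" and s: "s \<in> S"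
  then obtain c :: "'a \<Rightarrow> int" where c: "b = (\<Sum>s\<in>S. of_int (c s) *\<^sub>R s)" using root_comb by blast
  have "co b s = of_int (c s)" by (rule co_unique) (use c s in auto)
  then show ?thesis by simp
qed

lemma root_sign: "b \<in> R \<Longrightarrow> (\<forall>s\<in>S. co b s \<ge> 0) \<or> (\<forall>s\<in>S. co b s \<le> 0)"
proof -
  assume b: "b \<in> R"
  then obtain c :: "'a \<Rightarrow> int" where c: "b = (\<Sum>s\<in>S. of_int (c s) *\<^sub>R s)"
    and sg: "(\<forall>s\<in>S. c s \<ge> 0) \<or> (\<forall>s\<in>S. c s \<le> 0)" using root_comb by blast
  have "s \<in> S \<Longrightarrow> co b s = of_int (c s)" for s by (rule co_unique) (use c in auto)
  then show ?thesis using sg by auto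
qed

lemma pos_iff: "b \<in> P \<longleftrightarrow> b \<in> R \<and> (\<forall>s\<in>S. co b s \<ge> 0)"
proof
  assume "b \<in> P"
  then obtain c :: "'a \<Rightarrow> nat" where b: "b \<in> R" and c: "b = (\<Sum>s\<in>S. of_nat (c s) *\<^sub>R s)"
    unfolding pos_roots_def Qplus_def by blast
  have "s \<in> S \<Longrightarrow> co b s = of_nat (c s)" for s by (rule co_unique) (use c in auto)
  then show "b \<in> R \<and> (\<forall>s\<in>S. co b s \<ge> 0)" using b by auto
next
  assume h: "b \<in> R \<and> (\<forall>s\<in>S. co b s \<ge> 0)"
  define c where "c s = nat \<lfloor>co b s\<rfloor>" for s
  have "s \<in> S \<Longrightarrow> of_nat (c s) = co b s" for s
    using co_int[of b s] h unfolding c_def by (auto elim!: Ints_cases)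
  then have "b = (\<Sum>s\<in>S. of_nat (c s) *\<^sub>R s)" using co_sum_eq[of b]
    by (metis (no_types, lifting) sum.cong)
  then show "b \<in> P" using h unfolding pos_roots_def Qplus_def by blast
qed

lemma PR: "P \<subseteq> R" unfolding pos_roots_def by auto
lemma finP: "finite P" using finite_subset[OF PR finR] .

lemma zero_by_co: "(\<And>s. s \<in> S \<Longrightarrow> co x s = 0) \<Longrightarrow> x = 0"
  using eq_by_co[of x 0] co_zero by auto

lemma pos_or_neg: "b \<in> R \<Longrightarrow> b \<in> P \<or> - b \<in> P"
  using root_sign[of b] neg_mem[of b] by (auto simp: pos_iff co_neg)

lemma not_both: "b \<in> P \<Longrightarrow> - b \<notin> P"
proof
  assume "b \<in> P" "- b \<in> P"
  then have "s \<in> S \<Longrightarrow> co b s = 0" for s by (force simp: pos_iff co_neg)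
  then have "b = 0" by (rule zero_by_co)
  then show False using \<open>b \<in> P\<close> PR nonzero by auto
qed

lemma S_pos: "s \<in> S \<Longrightarrow> s \<in> P"
  using SR by (auto simp: pos_iff co_basis)

lemma co_refl: "s \<in> S \<Longrightarrow> t \<in> S \<Longrightarrow>
   co (refl s b) t = co b t - 2 * (b \<bullet> s) / (s \<bullet> s) * (if t = s then 1 else 0)"
  unfolding refl_def by (simp add: co_diff co_scale co_basis)

lemma refl_pos: assumes s: "s \<in> S" and b: "b \<in> P" and ne: "b \<noteq> s"
  shows "refl s b \<in> P"
proof (rule ccontr)
  assume np: "refl s b \<notin> P"
  have sR: "s \<in> R" using s SR by auto
  have bR: "b \<in> R" using b PR by auto
  have rR: "refl s b \<in> R" using refl_mem[OF sR bR] .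
  have neg: "\<forall>t\<in>S. co (refl s b) t \<le> 0"
    using root_sign[OF rR] np rR by (auto simp: pos_iff)
  have z: "t \<in> S \<Longrightarrow> t \<noteq> s \<Longrightarrow> co b t = 0" for t
    using neg b co_refl[OF s, of t b] by (force simp: pos_iff)
  have "b = co b s *\<^sub>R s"
  proof (rule eq_by_co)
    fix t assume t: "t \<in> S"
    show "co b t = co (co b s *\<^sub>R s) t"
      using z[OF t] by (cases "t = s") (auto simp: co_scale co_basis t s)
  qed
  then have "co b s *\<^sub>R s \<in> R" using bR by simp
  then have "co b s = 1 \<or> co b s = -1" using reduced[OF sR] by blast
  moreover have "co b s \<ge> 0" using b s by (auto simp: pos_iff)
  ultimately have "co b s = 1" by auto
  with \<open>b = co b s *\<^sub>R s\<close> ne show False by simp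
qed

lemma refl_s_s: "s \<in> S \<Longrightarrow> refl s s = - s"
  using refl_self SR nonzero by auto

lemma refl_S_invol: "s \<in> S \<Longrightarrow> refl s (refl s x) = x"
  using refl_refl SR nonzero by auto

lemma refl_perm: assumes s: "s \<in> S" shows "bij_betw (refl s) (P - {s}) (P - {s})"
proof -
  have into: "refl s b \<in> P - {s}" if "b \<in> P - {s}" for b
  proof -
    have "refl s b \<in> P" using refl_pos[OF s] that by auto
    moreover have "refl s b \<noteq> s"
    proof
      assume "refl s b = s"
      then have "b = - s" using refl_S_invol[OF s, of b] refl_s_s[OF s] by metis
      then show False using that S_pos[OF s] not_both by auto
    qed
    ultimately show ?thesis by auto
  qed
  show ?thesis
    by (rule bij_betw_byWitness[where f'="refl s"]) (use into refl_S_invol[OF s] in auto)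
qed

lemma rho_refl: assumes s: "s \<in> S" shows "refl s (rho R S) = rho R S - s"
proof -
  have sP: "s \<in> P" using S_pos[OF s] .
  have "refl s (\<Sum>P) = (\<Sum>b\<in>P. refl s b)" by (simp add: refl_sum)
  also have "\<dots> = refl s s + (\<Sum>b\<in>P - {s}. refl s b)"
    using sP finP by (simp add: sum.remove)
  also have "(\<Sum>b\<in>P - {s}. refl s b) = (\<Sum>b\<in>P - {s}. b)"
    using sum.reindex_bij_betw[OF refl_perm[OF s], of id] by simp
  also have "(\<Sum>b\<in>P - {s}. b) = \<Sum>P - s" using sP finP by (simp add: sum_diff1)
  finally have "refl s (\<Sum>P) = \<Sum>P - 2 *\<^sub>R s" using refl_s_s[OF s] by (simp add: scaleR_2)
  then have "refl s (rho R S) = (1/2) *\<^sub>R (\<Sum>P - 2 *\<^sub>R s)" unfolding rho_def by (simp add: refl_scale)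
  also have "\<dots> = rho R S - s" unfolding rho_def by (simp add: scaleR_diff_right)
  finally show ?thesis .
qed

definition hgt :: "'a \<Rightarrow> real" where "hgt x = (\<Sum>s\<in>S. co x s)"

lemma hgt_pos: assumes b: "b \<in> P" shows "hgt b \<ge> 1"
proof -
  have "b \<noteq> 0" using b PR nonzero by auto
  then obtain t where t: "t \<in> S" "co b t \<noteq> 0" using zero_by_co by blast
  have ge: "\<forall>s\<in>S. co b s \<ge> 0" using b by (simp add: pos_iff)
  have "co b t \<in> \<int>" using co_int t b PR by auto
  then have "co b t \<ge> 1" using t ge by (auto elim!: Ints_cases)
  also have "co b t \<le> hgt b" unfolding hgt_def
    using member_le_sum[of t S "co b"] t ge finS by auto
  finally show ?thesis .
qed

lemma hgt_add: "hgt (x + y) = hgt x + hgt y" unfolding hgt_def by (simp add: co_add sum.distrib)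
lemma hgt_diff: "hgt (x - y) = hgt x - hgt y" unfolding hgt_def by (simp add: co_diff sum_subtractf)
lemma hgt_scale: "hgt (c *\<^sub>R x) = c * hgt x" unfolding hgt_def by (simp add: co_scale sum_distrib_left)
lemma hgt_S: "s \<in> S \<Longrightarrow> hgt s = 1" unfolding hgt_def by (simp add: co_basis finS)

end

context RS begin

definition FF :: "'a set \<Rightarrow> 'a \<Rightarrow> ('a \<Rightarrow> nat) set" where
  "FF A \<gamma> = {f. (\<forall>b. b \<notin> A \<longrightarrow> f b = 0) \<and> (\<Sum>b\<in>A. of_nat (f b) *\<^sub>R b) = \<gamma>}"
definition PP :: "'a set \<Rightarrow> 'a \<Rightarrow> int poly" where
  "PP A \<gamma> = (\<Sum>f\<in>FF A \<gamma>. monom 1 (\<Sum>b\<in>A. f b))"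

lemma Pq_PP: "Pq R S \<gamma> = PP P \<gamma>"
  unfolding Pq_def PP_def FF_def by simp

lemma hgt_zero: "hgt 0 = 0" unfolding hgt_def by (simp add: co_zero)
lemma hgt_sum: "hgt (sum g A) = (\<Sum>x\<in>A. hgt (g x))"
  by (induction A rule: infinite_finite_induct) (simp_all add: hgt_add hgt_zero)

lemma finite_FF: assumes A: "A \<subseteq> P" shows "finite (FF A \<gamma>)"
proof -
  have finA: "finite A" using finite_subset[OF A finP] .
  define N where "N = nat \<lceil>hgt \<gamma>\<rceil>"
  have "FF A \<gamma> \<subseteq> {f. \<forall>x. (x \<in> A \<longrightarrow> f x \<in> {..N}) \<and> (x \<notin> A \<longrightarrow> f x = 0)}"
  proof (intro subsetI CollectI allI conjI impI)
    fix f x assume f: "f \<in> FF A \<gamma>" and x: "x \<in> A"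
    have "\<forall>b\<in>A. 0 \<le> hgt b" using hgt_pos A by (meson order_trans zero_le_one subsetD)
    then have nn: "\<forall>b\<in>A. 0 \<le> of_nat (f b) * hgt b" by simp
    have "hgt \<gamma> = (\<Sum>b\<in>A. of_nat (f b) * hgt b)"
      using f unfolding FF_def by (auto simp: hgt_sum hgt_scale)
    also have "\<dots> \<ge> of_nat (f x) * hgt x"
      using member_le_sum[of x A "\<lambda>b. of_nat (f b) * hgt b"] x nn finA by auto
    also have "of_nat (f x) * hgt x \<ge> of_nat (f x)"
      using hgt_pos[of x] x A by (auto simp: mult_le_cancel_left1)
    finally have "real (f x) \<le> hgt \<gamma>" .
    then show "f x \<in> {..N}" unfolding N_def by (simp add: le_nat_iff le_ceiling_iff)
  next
    fix f x assume "f \<in> FF A \<gamma>" "x \<notin> A" then show "f x = 0" unfolding FF_def by auto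
  qed
  moreover have "finite {f. \<forall>x. (x \<in> A \<longrightarrow> f x \<in> {..N}) \<and> (x \<notin> A \<longrightarrow> f x = (0::nat))}"
    by (rule finite_set_of_finite_funs) (use finA in auto)
  ultimately show ?thesis by (rule finite_subset)
qed

lemma PP_split: assumes s: "s \<in> S"
  shows "PP P \<gamma> = PP (P - {s}) \<gamma> + monom 1 1 * PP P (\<gamma> - s)"
proof -
  have sP: "s \<in> P" using S_pos[OF s] .
  define F0 where "F0 = {f \<in> FF P \<gamma>. f s = 0}"
  define F1 where "F1 = {f \<in> FF P \<gamma>. f s \<noteq> 0}"
  have fin: "finite (FF P \<gamma>)" by (rule finite_FF) simp
  have un: "FF P \<gamma> = F0 \<union> F1" "F0 \<inter> F1 = {}" unfolding F0_def F1_def by auto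
  have "PP P \<gamma> = (\<Sum>f\<in>F0. monom 1 (\<Sum>b\<in>P. f b)) + (\<Sum>f\<in>F1. monom 1 (\<Sum>b\<in>P. f b))"
    unfolding PP_def un(1) by (rule sum.union_disjoint) (use fin un in auto)
  moreover have "(\<Sum>f\<in>F0. monom 1 (\<Sum>b\<in>P. f b)) = PP (P - {s}) \<gamma>"
  proof -
    have eqs: "(\<Sum>b\<in>P. g b) = (\<Sum>b\<in>P - {s}. g b) + g s" for g :: "'a \<Rightarrow> 'b::comm_monoid_add"
      using sP finP by (simp add: sum.remove add.commute)
    have "F0 = FF (P - {s}) \<gamma>"
      unfolding F0_def FF_def using eqs[of "\<lambda>b. of_nat (_ b) *\<^sub>R b"] by (auto simp: eqs)
    moreover have "f \<in> F0 \<Longrightarrow> (\<Sum>b\<in>P. f b) = (\<Sum>b\<in>P - {s}. f b)" for f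
      unfolding F0_def by (simp add: eqs)
    ultimately show ?thesis unfolding PP_def by (auto intro: sum.cong)
  qed
  moreover have "(\<Sum>f\<in>F1. monom 1 (\<Sum>b\<in>P. f b)) = monom 1 1 * PP P (\<gamma> - s)"
  proof -
    have eqs: "(\<Sum>b\<in>P. g b) = g s + (\<Sum>b\<in>P - {s}. g b)" for g :: "'a \<Rightarrow> 'b::comm_monoid_add"
      using sP finP by (simp add: sum.remove)
    have "monom 1 1 * PP P (\<gamma> - s) = (\<Sum>g\<in>FF P (\<gamma> - s). monom 1 (\<Sum>b\<in>P. (g(s := g s + 1)) b))"
      unfolding PP_def sum_distrib_left
      by (rule sum.cong) (auto simp: eqs mult_monom)
    also have "\<dots> = (\<Sum>f\<in>F1. monom 1 (\<Sum>b\<in>P. f b))"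
    proof (rule sum.reindex_bij_witness[where i = "\<lambda>f. f(s := f s - 1)" and j = "\<lambda>g. g(s := g s + 1)"])
      fix f assume f: "f \<in> F1"
      show "(f(s := f s - 1))(s := (f(s := f s - 1)) s + 1) = f" using f unfolding F1_def by auto
      have "(\<Sum>b\<in>P. of_nat ((f(s := f s - 1)) b) *\<^sub>R b) = (\<Sum>b\<in>P. of_nat (f b) *\<^sub>R b) - s"
        using f unfolding F1_def by (simp add: eqs of_nat_diff scaleR_diff_left)
      then show "f(s := f s - 1) \<in> FF P (\<gamma> - s)" using f sP unfolding F1_def FF_def by auto
    next
      fix g assume g: "g \<in> FF P (\<gamma> - s)"
      show "(g(s := g s + 1))(s := (g(s := g s + 1)) s - 1) = g" by auto
      have "(\<Sum>b\<in>P. of_nat ((g(s := g s + 1)) b) *\<^sub>R b) = (\<Sum>b\<in>P. of_nat (g b) *\<^sub>R b) + s"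
        by (simp add: eqs scaleR_add_left)
      then show "g(s := g s + 1) \<in> F1" using g sP unfolding F1_def FF_def by auto
      show "monom 1 (\<Sum>b\<in>P. (g(s := g s + 1)) b) = monom 1 (\<Sum>b\<in>P. (g(s := g s + 1)) b)" by simp
    qed
    finally show ?thesis by simp
  qed
  ultimately show ?thesis by simp
qed

lemma PP_refl: assumes s: "s \<in> S"
  shows "PP (P - {s}) (refl s \<gamma>) = PP (P - {s}) \<gamma>"
proof -
  let ?A = "P - {s}"
  have bij: "bij_betw (refl s) ?A ?A" using refl_perm[OF s] .
  have inA: "b \<in> ?A \<longleftrightarrow> refl s b \<in> ?A" for b
    using bij refl_S_invol[OF s] by (metis bij_betw_apply)
  have key: "(\<Sum>b\<in>?A. h (refl s b)) = (\<Sum>b\<in>?A. h b)" for h :: "'a \<Rightarrow> 'b::comm_monoid_add"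
    using sum.reindex_bij_betw[OF bij, of h] by simp
  show ?thesis unfolding PP_def
  proof (rule sum.reindex_bij_witness[where j = "\<lambda>f. f \<circ> refl s" and i = "\<lambda>f. f \<circ> refl s"])
    fix f assume f: "f \<in> FF ?A \<gamma>"
    show "(f \<circ> refl s) \<circ> refl s = f" by (auto simp: refl_S_invol[OF s])
    have "(\<Sum>b\<in>?A. of_nat ((f \<circ> refl s) b) *\<^sub>R b) = (\<Sum>b\<in>?A. of_nat (f (refl s b)) *\<^sub>R refl s (refl s b))"
      by (simp add: refl_S_invol[OF s])
    also have "\<dots> = (\<Sum>b\<in>?A. of_nat (f b) *\<^sub>R refl s b)"
      using key[of "\<lambda>c. of_nat (f c) *\<^sub>R refl s c"] by simp
    also have "\<dots> = refl s \<gamma>"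
    proof -
      have "\<gamma> = (\<Sum>b\<in>?A. of_nat (f b) *\<^sub>R b)" using f unfolding FF_def by auto
      then show ?thesis by (simp add: refl_sum refl_scale)
    qed
    finally show "f \<circ> refl s \<in> FF ?A (refl s \<gamma>)" using f inA unfolding FF_def by auto
  next
    fix f assume f: "f \<in> FF ?A (refl s \<gamma>)"
    show "(f \<circ> refl s) \<circ> refl s = f" by (auto simp: refl_S_invol[OF s])
    have "(\<Sum>b\<in>?A. of_nat ((f \<circ> refl s) b) *\<^sub>R b) = (\<Sum>b\<in>?A. of_nat (f (refl s b)) *\<^sub>R refl s (refl s b))"
      by (simp add: refl_S_invol[OF s])
    also have "\<dots> = (\<Sum>b\<in>?A. of_nat (f b) *\<^sub>R refl s b)"
      using key[of "\<lambda>c. of_nat (f c) *\<^sub>R refl s c"] by simp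
    also have "\<dots> = refl s (refl s \<gamma>)"
    proof -
      have "refl s \<gamma> = (\<Sum>b\<in>?A. of_nat (f b) *\<^sub>R b)" using f unfolding FF_def by auto
      then show ?thesis by (simp add: refl_sum refl_scale)
    qed
    also have "\<dots> = \<gamma>" by (simp add: refl_S_invol[OF s])
    finally show "f \<circ> refl s \<in> FF ?A \<gamma>" using f inA unfolding FF_def by auto
    show "monom 1 (\<Sum>b\<in>?A. (f \<circ> refl s) b) = monom 1 (\<Sum>b\<in>?A. f b)" using key[of f] by simp

  qed
qed

end


definition wd :: "'a::euclidean_space list \<Rightarrow> 'a \<Rightarrow> 'a" where
  "wd xs = foldr (\<lambda>a f. refl a \<circ> f) xs id"

lemma wd_Nil[simp]: "wd [] = id" unfolding wd_def by simp
lemma wd_Cons[simp]: "wd (a # xs) = refl a \<circ> wd xs" unfolding wd_def by simp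
lemma wd_append: "wd (xs @ ys) = wd xs \<circ> wd ys"
  by (induction xs) auto
lemma wd_linear: "linear (wd xs)"
proof (induction xs)
  case Nil show ?case unfolding wd_Nil by (rule linear_id)
next
  case (Cons a xs) show ?case unfolding wd_Cons by (rule linear_compose[OF Cons.IH refl_linear])
qed

context RS begin

lemma wd_rev: "set xs \<subseteq> S \<Longrightarrow> wd (rev xs) \<circ> wd xs = id"
proof (induction xs)
  case (Cons a xs)
  then have a: "a \<in> S" by auto
  have "wd (rev (a # xs)) \<circ> wd (a # xs) = wd (rev xs) \<circ> (refl a \<circ> refl a) \<circ> wd xs"
    by (simp add: wd_append comp_assoc)
  also have "refl a \<circ> refl a = id" using refl_S_invol[OF a] by auto
  finally show ?case using Cons by simp
qed simp

lemma wd_rev2: "set xs \<subseteq> S \<Longrightarrow> wd xs \<circ> wd (rev xs) = id"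
  using wd_rev[of "rev xs"] by simp

lemma wd_inner: "set xs \<subseteq> S \<Longrightarrow> wd xs x \<bullet> wd xs y = x \<bullet> y"
proof (induction xs)
  case (Cons a xs)
  then have "a \<noteq> 0" using SR nonzero by auto
  then show ?case using Cons by (simp add: refl_inner)
qed simp

lemma wd_R: "set xs \<subseteq> S \<Longrightarrow> b \<in> R \<Longrightarrow> wd xs b \<in> R"
proof (induction xs)
  case (Cons a xs)
  then show ?case using SR refl_mem by auto
qed simp

lemma wd_bij: assumes "set xs \<subseteq> S" shows "bij_betw (wd xs) R R"
proof (rule bij_betw_byWitness[where f' = "wd (rev xs)"])
  show "\<forall>a\<in>R. wd (rev xs) (wd xs a) = a" using wd_rev[OF assms] by (metis comp_apply id_apply)
  show "\<forall>a\<in>R. wd xs (wd (rev xs) a) = a" using wd_rev2[OF assms] by (metis comp_apply id_apply)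
  show "wd xs ` R \<subseteq> R" using wd_R[OF assms] by auto
  show "wd (rev xs) ` R \<subseteq> R" using wd_R[of "rev xs"] assms by auto
qed

lemma wd_conj: assumes xs: "set xs \<subseteq> S" and a: "a \<noteq> 0"
  shows "refl (wd xs a) = wd xs \<circ> refl a \<circ> wd (rev xs)"
proof
  fix x
  let ?u = "wd xs" and ?v = "wd (rev xs)"
  have uv: "?u (?v x) = x" using wd_rev2[OF xs] by (metis comp_apply id_apply)
  have i1: "?v x \<bullet> a = x \<bullet> ?u a" using wd_inner[OF xs, of "?v x" a] uv by simp
  have i2: "a \<bullet> a = ?u a \<bullet> ?u a" using wd_inner[OF xs, of a a] by simp
  have "(?u \<circ> refl a \<circ> ?v) x = ?u (?v x - (2 * (?v x \<bullet> a) / (a \<bullet> a)) *\<^sub>R a)"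
    by (simp add: refl_def)
  also have "\<dots> = x - (2 * (x \<bullet> ?u a) / (?u a \<bullet> ?u a)) *\<^sub>R ?u a"
    using uv i1 i2 by (simp add: linear_diff[OF wd_linear] linear_scale[OF wd_linear])
  finally show "refl (?u a) x = (?u \<circ> refl a \<circ> ?v) x" by (simp add: refl_def)
qed

lemma pos_has_pos_simple: assumes a: "a \<in> P" shows "\<exists>t\<in>S. a \<bullet> t > 0"
proof (rule ccontr)
  assume "\<not> ?thesis"
  then have le: "\<forall>t\<in>S. a \<bullet> t \<le> 0" by auto
  have ge: "\<forall>t\<in>S. co a t \<ge> 0" using a by (simp add: pos_iff)
  have "a \<bullet> a = a \<bullet> (\<Sum>t\<in>S. co a t *\<^sub>R t)" using co_sum_eq[of a] by simp
  also have "\<dots> = (\<Sum>t\<in>S. co a t * (a \<bullet> t))" by (simp add: inner_sum_right)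
  also have "\<dots> \<le> 0" using le ge by (intro sum_nonpos) (simp add: mult_nonneg_nonpos)
  finally have "a = 0" by (metis inner_gt_zero_iff not_less)
  then show False using a PR nonzero by auto
qed

lemma cartan_pos_ge1: assumes "a \<in> R" "t \<in> R" "a \<bullet> t > 0"
  shows "2 * (a \<bullet> t) / (t \<bullet> t) \<ge> 1"
proof -
  have "t \<noteq> 0" using assms nonzero by auto
  then have "2 * (a \<bullet> t) / (t \<bullet> t) > 0" using assms by (simp add: divide_pos_pos)
  moreover have "2 * (a \<bullet> t) / (t \<bullet> t) \<in> \<int>" using cartan_int assms by auto
  ultimately show ?thesis by (auto elim!: Ints_cases)
qed

lemma hgt_refl: "t \<in> S \<Longrightarrow> hgt (refl t a) = hgt a - 2 * (a \<bullet> t) / (t \<bullet> t)"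
  unfolding refl_def by (simp add: hgt_diff hgt_scale hgt_S)

lemma pos_conj_simple:
  "\<forall>a\<in>P. hgt a \<le> real n \<longrightarrow> (\<exists>xs s. set xs \<subseteq> S \<and> s \<in> S \<and> a = wd xs s)"
proof (induction n)
  case 0
  then show ?case using hgt_pos by force
next
  case (Suc n)
  show ?case
  proof (intro ballI impI)
    fix a assume a: "a \<in> P" and h: "hgt a \<le> real (Suc n)"
    show "\<exists>xs s. set xs \<subseteq> S \<and> s \<in> S \<and> a = wd xs s"
    proof (cases "a \<in> S")
      case True then show ?thesis by (intro exI[of _ "[]"] exI[of _ a]) auto
    next
      case False
      obtain t where t: "t \<in> S" "a \<bullet> t > 0" using pos_has_pos_simple[OF a] by blast
      have tR: "t \<in> R" using t SR by auto
      have aR: "a \<in> R" using a PR by auto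
      have b: "refl t a \<in> P" using refl_pos[OF t(1) a] False t by auto
      have "hgt (refl t a) \<le> real n"
        using hgt_refl[OF t(1), of a] cartan_pos_ge1[OF aR tR t(2)] h by simp
      then obtain xs s where xs: "set xs \<subseteq> S" "s \<in> S" "refl t a = wd xs s"
        using Suc.IH b by blast
      have "a = refl t (refl t a)" using refl_S_invol[OF t(1)] by simp
      also have "\<dots> = wd (t # xs) s" using xs by simp
      finally show ?thesis using xs t by (intro exI[of _ "t # xs"] exI[of _ s]) auto
    qed
  qed
qed

lemma root_conj_simple: assumes a: "a \<in> R"
  shows "\<exists>xs s. set xs \<subseteq> S \<and> s \<in> S \<and> (a = wd xs s \<or> a = - wd xs s)"
proof -
  have ex: "\<exists>n::nat. hgt b \<le> real n" for b by (meson real_nat_ceiling_ge)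
  show ?thesis
  proof (cases "a \<in> P")
    case True
    then show ?thesis using pos_conj_simple ex[of a] by blast
  next
    case False
    then have "- a \<in> P" using pos_or_neg a by auto
    then obtain xs s where "set xs \<subseteq> S" "s \<in> S" "- a = wd xs s"
      using pos_conj_simple ex[of "-a"] by blast
    moreover from this have "a = - wd xs s" by (metis minus_minus)
    ultimately show ?thesis by blast
  qed
qed

definition WS where "WS = {wd xs | xs. set xs \<subseteq> S}"

lemma refl_in_WS: assumes a: "a \<in> R" shows "refl a \<in> WS"
proof -
  obtain xs s where xs: "set xs \<subseteq> S" "s \<in> S" "a = wd xs s \<or> a = - wd xs s"
    using root_conj_simple[OF a] by blast
  have s0: "s \<noteq> 0" using xs SR nonzero by auto
  have "refl a = refl (wd xs s)" using xs(3) refl_negroot by metis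
  also have "\<dots> = wd (xs @ [s] @ rev xs)" using wd_conj[OF xs(1) s0] by (simp add: wd_append comp_assoc)
  finally show ?thesis unfolding WS_def by (intro CollectI exI[of _ "xs @ [s] @ rev xs"]) (use xs in auto)
qed

lemma weyl_WS: "w \<in> weyl R \<Longrightarrow> w \<in> WS"
proof (induction rule: weyl.induct)
  case weyl_id
  then show ?case unfolding WS_def by (intro CollectI exI[of _ "[]"]) auto
next
  case (weyl_step w a)
  obtain xs where xs: "set xs \<subseteq> S" "w = wd xs" using weyl_step.IH unfolding WS_def by blast
  obtain ys where ys: "set ys \<subseteq> S" "refl a = wd ys" using refl_in_WS[OF weyl_step.hyps(2)] unfolding WS_def by blast
  show ?case unfolding WS_def using xs ys by (intro CollectI exI[of _ "ys @ xs"]) (auto simp: wd_append)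
qed

definition Ninv where "Ninv w = {b \<in> P. w b \<notin> P}"

lemma finite_Ninv: "finite (Ninv w)" unfolding Ninv_def using finP by auto

lemma Ninv_flip: assumes lin: "linear w" and bij: "bij_betw w R R" and s: "s \<in> S"
  shows "even (card (Ninv (refl s \<circ> w))) \<longleftrightarrow> odd (card (Ninv w))"
proof -
  have sR: "s \<in> R" using s SR by auto
  have sP: "s \<in> P" using S_pos[OF s] .
  have nsP: "- s \<notin> P" using not_both[OF sP] .
  obtain b0 where b0: "b0 \<in> R" "w b0 = s" using bij sR by (metis bij_betw_iff_bijections)
  have inj: "x \<in> R \<Longrightarrow> y \<in> R \<Longrightarrow> w x = w y \<Longrightarrow> x = y" for x y
    using bij by (metis bij_betw_iff_bijections)
  have wneg: "w (- x) = - w x" for x using linear_neg[OF lin] .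
  have wR: "x \<in> R \<Longrightarrow> w x \<in> R" for x using bij by (metis bij_betw_apply)
  have char: "refl s (w b) \<notin> P \<longleftrightarrow> (w b \<notin> P \<and> w b \<noteq> - s) \<or> w b = s" if b: "b \<in> P" for b
  proof -
    have wb: "w b \<in> R" using wR b PR by auto
    consider "w b = s" | "w b = - s" | "w b \<in> P" "w b \<noteq> s" | "w b \<notin> P" "w b \<noteq> - s" by blast
    then show ?thesis
    proof cases
      case 1 then show ?thesis using refl_s_s[OF s] nsP by simp
    next
      case 2 then show ?thesis using refl_s_s[OF s] refl_neg[of s s] sP nsP by auto
    next
      case 3 then show ?thesis using refl_pos[OF s] by auto
    next
      case 4
      then have "- w b \<in> P" using pos_or_neg wb by auto
      moreover have "- w b \<noteq> s" using 4 by auto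
      ultimately have "refl s (- w b) \<in> P" using refl_pos[OF s] by auto
      then have "- refl s (w b) \<in> P" by (simp add: refl_neg)
      then have "refl s (w b) \<notin> P" using not_both by fastforce
      then show ?thesis using 4 by auto
    qed
  qed
  have NN: "Ninv (refl s \<circ> w) = {b \<in> P. (w b \<notin> P \<and> w b \<noteq> - s) \<or> w b = s}"
    unfolding Ninv_def using char by auto
  show ?thesis
  proof (cases "b0 \<in> P")
    case True
    have "Ninv (refl s \<circ> w) = insert b0 (Ninv w)"
    proof -
      have "b \<in> P \<Longrightarrow> w b \<noteq> - s" for b
      proof
        assume "b \<in> P" "w b = - s"
        then have "w b = w (- b0)" using b0 wneg by simp
        then have "b = - b0" using inj \<open>b \<in> P\<close> PR neg_mem b0 by blast
        then show False using \<open>b \<in> P\<close> True not_both by auto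
      qed
      then have "{b \<in> P. (w b \<notin> P \<and> w b \<noteq> - s) \<or> w b = s} = insert b0 {b \<in> P. w b \<notin> P}"
        using True b0 sP inj PR by auto
      then show ?thesis using NN unfolding Ninv_def by simp
    qed
    moreover have "b0 \<notin> Ninv w" unfolding Ninv_def using b0 sP by auto
    ultimately show ?thesis using finite_Ninv by simp
  next
    case False
    have nb0: "- b0 \<in> P" using pos_or_neg b0 False by auto
    have wnb0: "w (- b0) = - s" using wneg b0 by simp
    have "Ninv (refl s \<circ> w) = Ninv w - {- b0}"
    proof -
      have "b \<in> P \<Longrightarrow> w b \<noteq> s" for b
      proof
        assume "b \<in> P" "w b = s"
        then have "b = b0" using inj b0 PR by auto
        then show False using \<open>b \<in> P\<close> False by simp
      qed
      moreover have "b \<in> P \<Longrightarrow> w b = - s \<Longrightarrow> b = - b0" for b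
        using inj[of b "- b0"] wnb0 PR nb0 by auto
      ultimately have "{b \<in> P. (w b \<notin> P \<and> w b \<noteq> - s) \<or> w b = s} = {b \<in> P. w b \<notin> P} - {- b0}"
        using wnb0 by auto
      then show ?thesis using NN unfolding Ninv_def by simp
    qed
    moreover have "- b0 \<in> Ninv w" unfolding Ninv_def using nb0 wnb0 nsP by auto
    ultimately show ?thesis using finite_Ninv
      by (metis card_Diff1_less card_Suc_Diff1 even_Suc)
  qed
qed

lemma par_wd: "set xs \<subseteq> S \<Longrightarrow> ((-1::int) ^ card (Ninv (wd xs))) = (-1) ^ length xs"
proof (induction xs)
  case Nil
  show ?case by (simp add: Ninv_def)
next
  case (Cons a xs)
  then have a: "a \<in> S" and xs: "set xs \<subseteq> S" by auto
  define c0 where "c0 = card (Ninv (wd xs))"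
  define c1 where "c1 = card (Ninv (wd (a # xs)))"
  have "wd (a # xs) = refl a \<circ> wd xs" by (rule wd_Cons)
  then have p: "even c1 \<longleftrightarrow> odd c0"
    using Ninv_flip[OF wd_linear wd_bij[OF xs] a] unfolding c0_def c1_def by metis
  have ih: "even c0 \<longleftrightarrow> even (length xs)" using Cons.IH[OF xs] unfolding c0_def
    by (auto simp: minus_one_power_iff split: if_splits)
  show ?case using p ih unfolding c1_def[symmetric] by (simp add: minus_one_power_iff)
qed

lemma wsign_Ninv: assumes w: "w \<in> weyl R" shows "wsign S w = (-1) ^ card (Ninv w)"
proof -
  obtain xs where xs: "set xs \<subseteq> S" "w = wd xs" using weyl_WS[OF w] unfolding WS_def by blast
  let ?Q = "\<lambda>n. \<exists>xs. set xs \<subseteq> S \<and> length xs = n \<and> w = foldr (\<lambda>a f. refl a \<circ> f) xs id"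
  have "?Q (length xs)" using xs unfolding wd_def by blast
  then have "?Q (LEAST n. ?Q n)" by (rule LeastI)
  then obtain ys where ys: "set ys \<subseteq> S" "length ys = wlen S w" "w = wd ys"
    unfolding wlen_def wd_def by blast
  show ?thesis unfolding wsign_def using par_wd[OF ys(1)] ys by simp
qed

lemma wsign_step: assumes w: "w \<in> weyl R" and s: "s \<in> S"
  shows "wsign S (refl s \<circ> w) = - wsign S w"
proof -
  have sR: "s \<in> R" using s SR by auto
  have w2: "refl s \<circ> w \<in> weyl R" using weyl_step[OF w sR] .
  obtain xs where xs: "set xs \<subseteq> S" "w = wd xs" using weyl_WS[OF w] unfolding WS_def by blast
  have "even (card (Ninv (refl s \<circ> w))) \<longleftrightarrow> odd (card (Ninv w))"
    using Ninv_flip[OF wd_linear wd_bij[OF xs(1)] s] xs(2) by simp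
  then show ?thesis unfolding wsign_Ninv[OF w] wsign_Ninv[OF w2] by (auto simp: minus_one_power_iff)
qed

end

context RS begin

abbreviation "qq \<equiv> (monom 1 1 :: int poly)"

definition Dd :: "'a \<Rightarrow> 'a \<Rightarrow> 'a \<Rightarrow> int poly" where
  "Dd s lam \<mu> = (\<Sum>w\<in>weyl R. of_int (wsign S w) * PP (P - {s}) (w (lam + rho R S) - (\<mu> + rho R S)))"

lemma mq_Dd: assumes s: "s \<in> S"
  shows "mq R S lam \<mu> = Dd s lam \<mu> + qq * mq R S lam (\<mu> + s)"
proof -
  let ?x = "lam + rho R S"
  have "mq R S lam \<mu> = (\<Sum>w\<in>weyl R. of_int (wsign S w) * (PP (P - {s}) (w ?x - (\<mu> + rho R S))
      + qq * PP P (w ?x - (\<mu> + s + rho R S))))"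
    unfolding mq_def Pq_PP
  proof (rule sum.cong)
    fix w
    have ve: "w ?x - (\<mu> + rho R S) - s = w ?x - (\<mu> + s + rho R S)"
      by (simp only: diff_diff_eq add.assoc add.commute[of s "rho R S"])
    show "of_int (wsign S w) * PP P (w ?x - (\<mu> + rho R S)) = of_int (wsign S w) * (PP (P - {s}) (w ?x - (\<mu> + rho R S))
      + qq * PP P (w ?x - (\<mu> + s + rho R S)))"
      using PP_split[OF s, of "w ?x - (\<mu> + rho R S)"] arg_cong[OF ve, of "PP P"] by (simp only:)
  qed simp
  also have "\<dots> = Dd s lam \<mu> + qq * mq R S lam (\<mu> + s)"
    unfolding Dd_def mq_def Pq_PP
    by (simp add: distrib_left sum.distrib sum_distrib_left mult.left_commute)
  finally show ?thesis .
qed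

lemma Dd_refl: assumes s: "s \<in> S"
  shows "Dd s lam (refl s \<mu> - s) = - Dd s lam \<mu>"
proof -
  let ?x = "lam + rho R S" and ?y = "\<mu> + rho R S" and ?A = "P - {s}"
  have sR: "s \<in> R" using s SR by auto
  have e1: "refl s \<mu> - s + rho R S = refl s ?y" using rho_refl[OF s] by (simp add: refl_add)
  have e2: "PP ?A (w ?x - refl s ?y) = PP ?A (refl s (w ?x) - ?y)" for w
  proof -
    have "w ?x - refl s ?y = refl s (refl s (w ?x) - ?y)" by (simp add: refl_diff refl_S_invol[OF s])
    then show ?thesis using PP_refl[OF s, of "refl s (w ?x) - ?y"] by simp
  qed
  have "Dd s lam (refl s \<mu> - s) = (\<Sum>w\<in>weyl R. of_int (wsign S w) * PP ?A (refl s (w ?x) - ?y))"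
    unfolding Dd_def e1 e2 ..
  also have "\<dots> = (\<Sum>w\<in>weyl R. - (of_int (wsign S w) * PP ?A (w ?x - ?y)))"
  proof (rule sum.reindex_bij_witness[where i = "\<lambda>w. refl s \<circ> w" and j = "\<lambda>w. refl s \<circ> w"])
    fix w assume w: "w \<in> weyl R"
    show "refl s \<circ> (refl s \<circ> w) = w" by (auto simp: refl_S_invol[OF s])
    show "refl s \<circ> w \<in> weyl R" using weyl_step[OF w sR] .
  next
    fix w assume w: "w \<in> weyl R"
    show "refl s \<circ> (refl s \<circ> w) = w" by (auto simp: refl_S_invol[OF s])
    show "refl s \<circ> w \<in> weyl R" using weyl_step[OF w sR] .
  next
    fix w assume w: "w \<in> weyl R"
    show "- (of_int (wsign S (refl s \<circ> w)) * PP ?A ((refl s \<circ> w) ?x - ?y)) =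
        of_int (wsign S w) * PP ?A (refl s (w ?x) - ?y)"
      using wsign_step[OF w s] by simp
  qed
  also have "\<dots> = - Dd s lam \<mu>" unfolding Dd_def by (simp add: sum_negf)
  finally show ?thesis .
qed

lemma mq_key: assumes s: "s \<in> S"
  shows "mq R S lam \<mu> - qq * mq R S lam (\<mu> + s) =
     - (mq R S lam (refl s \<mu> - s) - qq * mq R S lam (refl s \<mu>))"
  using mq_Dd[OF s, of lam \<mu>] mq_Dd[OF s, of lam "refl s \<mu> - s"] Dd_refl[OF s, of lam \<mu>] by simp

lemma poly_self_neg: "(x::int poly) = - x \<Longrightarrow> x = 0"
  by (rule poly_eqI) (metis coeff_minus coeff_0 add.inverse_inverse equation_minus_iff neg_equal_zero)

lemma mq_up: assumes s: "s \<in> S" and m: "refl s \<mu> = \<mu> + s"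
  shows "mq R S lam \<mu> = qq * mq R S lam (\<mu> + s)"
proof -
  have "mq R S lam \<mu> - qq * mq R S lam (\<mu> + s) = - (mq R S lam \<mu> - qq * mq R S lam (\<mu> + s))"
    using mq_key[OF s, of lam \<mu>] m by simp
  then show ?thesis using poly_self_neg by fastforce
qed

lemma mq_zero: assumes s: "s \<in> S"
  shows "mq R S lam 0 - qq * mq R S lam s = qq * mq R S lam 0 - mq R S lam (- s)"
  using mq_key[OF s, of lam 0] by (simp add: refl_zero)

end

context RS begin

lemma inner_co: "x \<bullet> d = (\<Sum>t\<in>S. co x t * (t \<bullet> d))"
proof -
  have "x \<bullet> d = (\<Sum>t\<in>S. co x t *\<^sub>R t) \<bullet> d" using co_sum_eq[of x] by simp
  also have "\<dots> = (\<Sum>t\<in>S. co x t * (t \<bullet> d))" by (simp add: inner_sum_left)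
  finally show ?thesis .
qed

lemma pos_dom_nonneg: assumes x: "x \<in> P" and d: "\<forall>t\<in>S. d \<bullet> t \<ge> 0" shows "x \<bullet> d \<ge> 0"
proof -
  have "\<forall>t\<in>S. co x t \<ge> 0" using x by (simp add: pos_iff)
  then have "(\<Sum>t\<in>S. co x t * (t \<bullet> d)) \<ge> 0" using d by (intro sum_nonneg) (simp add: inner_commute)
  then show ?thesis using inner_co[of x d] by simp
qed

lemma int_pos_ge2: "(x::real) \<in> \<int> \<Longrightarrow> x > 0 \<Longrightarrow> x \<noteq> 1 \<Longrightarrow> x \<ge> 2"
  by (auto elim!: Ints_cases)

lemma diff_root: assumes a: "a \<in> R" and b: "b \<in> R" and ab: "a \<bullet> b > 0" and ne: "a \<noteq> b"
  shows "a - b \<in> R"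
proof -
  have a0: "a \<bullet> a > 0" and b0: "b \<bullet> b > 0" using a b nonzero by auto
  define k where "k = 2 * (a \<bullet> b) / (b \<bullet> b)"
  define l where "l = 2 * (b \<bullet> a) / (a \<bullet> a)"
  have ki: "k \<in> \<int>" unfolding k_def using cartan_int[OF b a] .
  have li: "l \<in> \<int>" unfolding l_def using cartan_int[OF a b] .
  have kp: "k > 0" unfolding k_def using ab b0 by simp
  have lp: "l > 0" unfolding l_def using ab a0 by (simp add: inner_commute)
  show ?thesis
  proof (cases "k = 1")
    case True
    have "refl b a = a - k *\<^sub>R b" unfolding refl_def k_def ..
    then have "refl b a = a - b" using True by simp
    then show ?thesis using refl_mem[OF b a] by simp
  next
    case False
    show ?thesis
    proof (cases "l = 1")
      case True
      have "refl a b = b - l *\<^sub>R a" unfolding refl_def l_def ..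
      then have "refl a b = b - a" using True by simp
      then have "b - a \<in> R" using refl_mem[OF a b] by simp
      then show ?thesis using neg_mem by fastforce
    next
      case False2: False
      have "k \<ge> 2" using int_pos_ge2[OF ki kp False] .
      then have h1: "a \<bullet> b \<ge> b \<bullet> b" unfolding k_def using b0 by (simp add: field_simps)
      have "l \<ge> 2" using int_pos_ge2[OF li lp False2] .
      then have h2: "a \<bullet> b \<ge> a \<bullet> a" unfolding l_def using a0 by (simp add: field_simps inner_commute)
      have "(a - b) \<bullet> (a - b) = a \<bullet> a - 2 * (a \<bullet> b) + b \<bullet> b"
        by (simp add: inner_diff_left inner_diff_right inner_commute)
      also have "\<dots> \<le> 0" using h1 h2 by simp
      finally have "a - b = 0" by (metis inner_gt_zero_iff not_less)
      then show ?thesis using ne by simp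
    qed
  qed
qed

lemma simple_pair: assumes s: "s \<in> S" and t: "t \<in> S" and ne: "s \<noteq> t" shows "s \<bullet> t \<le> 0"
proof (rule ccontr)
  assume "\<not> s \<bullet> t \<le> 0"
  then have st: "0 < s \<bullet> t" by simp
  have "s \<in> R" "t \<in> R" using SR s t by auto
  then have "s - t \<in> R" using diff_root[OF _ _ st ne] by blast
  moreover have "co (s - t) s = 1" "co (s - t) t = -1"
    using s t ne by (simp_all add: co_diff co_basis)
  ultimately show False using root_sign[of "s - t"] s t by force
qed

lemma mult_simple: assumes b: "b \<in> P" and t: "t \<in> S" and z: "\<forall>u\<in>S. u \<noteq> t \<longrightarrow> co b u = 0"
  shows "b = t"
proof -
  have tR: "t \<in> R" using t SR by auto
  have "b = co b t *\<^sub>R t"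
  proof (rule eq_by_co)
    fix u assume u: "u \<in> S"
    show "co b u = co (co b t *\<^sub>R t) u"
      using z u by (cases "u = t") (auto simp: co_scale co_basis t)
  qed
  moreover have "co b t *\<^sub>R t \<in> R" using b PR calculation by auto
  then have "co b t = 1 \<or> co b t = -1" using reduced[OF tR] by blast
  moreover have "co b t \<ge> 0" using b t by (auto simp: pos_iff)
  ultimately show ?thesis by auto
qed

lemma cartan_m1: assumes m: "\<mu> \<in> P" and t: "t \<in> S" and neg: "\<mu> \<bullet> t < 0" and le: "\<mu> \<bullet> \<mu> \<le> t \<bullet> t"
  shows "refl t \<mu> = \<mu> + t"
proof -
  have tR: "t \<in> R" using t SR by auto
  have mR: "\<mu> \<in> R" using m PR by auto
  have t0: "t \<bullet> t > 0" using tR nonzero by auto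
  define k where "k = 2 * (\<mu> \<bullet> t) / (t \<bullet> t)"
  have ki: "k \<in> \<int>" unfolding k_def using cartan_int[OF tR mR] .
  have kn: "k < 0" unfolding k_def using neg t0 by (simp add: divide_neg_pos)
  have "k = -1"
  proof (rule ccontr)
    assume "k \<noteq> -1"
    obtain z where z: "k = of_int z" using ki by (auto elim!: Ints_cases)
    then have "z < 0" "z \<noteq> -1" using kn \<open>k \<noteq> -1\<close> by auto
    then have "z \<le> -2" by linarith
    then have "k \<le> -2" using z by simp
    then have h: "\<mu> \<bullet> t \<le> - (t \<bullet> t)" unfolding k_def using t0 by (simp add: field_simps)
    have "(\<mu> + t) \<bullet> (\<mu> + t) = \<mu> \<bullet> \<mu> + 2 * (\<mu> \<bullet> t) + t \<bullet> t"
      by (simp add: inner_add_left inner_add_right inner_commute)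
    also have "\<dots> \<le> 0" using h le by simp
    finally have "\<mu> + t = 0" by (metis inner_gt_zero_iff not_less)
    then have "\<mu> = - t" by (simp add: eq_neg_iff_add_eq_0)
    then show False using m S_pos[OF t] not_both by auto
  qed
  then show ?thesis unfolding refl_def k_def[symmetric] by simp
qed

lemma orth_split: assumes T: "T \<subseteq> S" and orth: "\<forall>t\<in>T. \<forall>u\<in>S - T. t \<bullet> u = 0"
  and x: "\<forall>s\<in>S - T. co x s = 0" and y: "\<forall>s\<in>T. co y s = 0"
  shows "x \<bullet> y = 0"
proof -
  have "x \<bullet> y = (\<Sum>t\<in>S. co x t * (t \<bullet> y))" by (rule inner_co)
  also have "\<dots> = 0"
  proof (rule sum.neutral, rule ballI)
    fix t assume t: "t \<in> S"
    show "co x t * (t \<bullet> y) = 0"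
    proof (cases "t \<in> T")
      case True
      have "t \<bullet> y = y \<bullet> t" by (simp add: inner_commute)
      also have "\<dots> = (\<Sum>u\<in>S. co y u * (u \<bullet> t))" by (rule inner_co)
      also have "\<dots> = 0"
      proof (rule sum.neutral, rule ballI)
        fix u assume u: "u \<in> S"
        show "co y u * (u \<bullet> t) = 0"
          using y orth True u by (cases "u \<in> T") (auto simp: inner_commute)
      qed
      finally show ?thesis by simp
    next
      case False then show ?thesis using x t by simp
    qed
  qed
  finally show ?thesis .
qed

lemma split_contra: assumes X: "X \<subseteq> S" and b: "b \<in> P" and bx: "\<forall>s\<in>S - X. co b s = 0"
  and t: "t \<in> S - X" and orth: "\<forall>x\<in>X. x \<bullet> t = 0" and bt: "b + t \<in> R"
  shows False
proof -
  have tS: "t \<in> S" and tX: "t \<notin> X" using t by auto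
  have tR: "t \<in> R" using tS SR by auto
  have t0: "t \<bullet> t \<noteq> 0" using tR nonzero by auto
  have "b \<bullet> t = (\<Sum>s\<in>S. co b s * (s \<bullet> t))" by (rule inner_co)
  also have "\<dots> = 0" using bx orth by (intro sum.neutral) (metis DiffI mult_eq_0_iff)
  finally have bt0: "b \<bullet> t = 0" .
  have "refl t (b + t) = b - t" unfolding refl_def using bt0 t0
    by (simp add: inner_add_left scaleR_2 algebra_simps)
  then have r: "b - t \<in> R" using refl_mem[OF tR bt] by simp
  have "b \<noteq> 0" using b PR nonzero by auto
  then obtain u where u: "u \<in> S" "co b u \<noteq> 0" using zero_by_co by blast
  then have uX: "u \<in> X" using bx by auto
  have "co b u > 0" using u b by (auto simp: pos_iff order_le_less)
  then have c1: "co (b - t) u > 0" using u uX tX by (auto simp: co_diff co_basis tS)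
  have c2: "co (b - t) t = -1" using bx t by (simp add: co_diff co_basis)
  show False using root_sign[OF r] c1 c2 u tS by force
qed

lemma connected:
  assumes irr: "irreducible_rs R" and T: "T \<subseteq> S" "T \<noteq> {}" "S - T \<noteq> {}"
  shows "\<exists>t\<in>T. \<exists>u\<in>S - T. t \<bullet> u \<noteq> 0"
proof (rule ccontr)
  assume "\<not> ?thesis"
  then have orth: "\<forall>t\<in>T. \<forall>u\<in>S - T. t \<bullet> u = 0" by auto
  have orth': "\<forall>u\<in>S - T. \<forall>t\<in>T. u \<bullet> t = 0" using orth by (metis inner_commute)
  have T2: "S - (S - T) = T" using T by auto
  define inT where "inT x \<longleftrightarrow> (\<forall>s\<in>S - T. co x s = 0)" for x
  define inU where "inU x \<longleftrightarrow> (\<forall>s\<in>T. co x s = 0)" for x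
  have claim: "\<forall>b\<in>P. hgt b \<le> real n \<longrightarrow> inT b \<or> inU b" for n
  proof (induction n)
    case 0 then show ?case using hgt_pos by force
  next
    case (Suc n)
    show ?case
    proof (intro ballI impI)
      fix b assume b: "b \<in> P" and h: "hgt b \<le> real (Suc n)"
      show "inT b \<or> inU b"
      proof (cases "b \<in> S")
        case True
        then have z: "\<forall>s\<in>S. s \<noteq> b \<longrightarrow> co b s = 0" by (simp add: co_basis)
        show ?thesis
        proof (cases "b \<in> T")
          case True then show ?thesis unfolding inT_def using z by auto
        next
          case False then show ?thesis unfolding inU_def using z T(1) by auto
        qed
      next
        case False
        obtain t where t: "t \<in> S" "b \<bullet> t > 0" using pos_has_pos_simple[OF b] by blast
        have bR: "b \<in> R" using b PR by auto
        have tR: "t \<in> R" using t SR by auto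
        have bt: "b \<noteq> t" using False t by auto
        define b' where "b' = b - t"
        have b'R: "b' \<in> R" unfolding b'_def using diff_root[OF bR tR t(2) bt] .
        have cb': "u \<in> S \<Longrightarrow> u \<noteq> t \<Longrightarrow> co b' u = co b u" for u
          unfolding b'_def using t by (simp add: co_diff co_basis)
        have b'P: "b' \<in> P"
        proof (rule ccontr)
          assume "b' \<notin> P"
          then have "\<forall>u\<in>S. co b' u \<le> 0" using root_sign[OF b'R] b'R by (auto simp: pos_iff)
          then have "\<forall>u\<in>S. u \<noteq> t \<longrightarrow> co b u = 0" using cb' b by (force simp: pos_iff)
          then have "b = t" using mult_simple[OF b t(1)] by blast
          then show False using bt by simp
        qed
        have "hgt b' \<le> real n" unfolding b'_def using h t by (simp add: hgt_diff hgt_S)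
        then have ih: "inT b' \<or> inU b'" using Suc.IH b'P by blast
        have bb: "b = b' + t" unfolding b'_def by simp
        have cb: "u \<in> S \<Longrightarrow> co b u = co b' u + (if u = t then 1 else 0)" for u
          unfolding bb using t by (simp add: co_add co_basis)
        show ?thesis
        proof (cases "t \<in> T")
          case True
          show ?thesis
          proof (cases "inT b'")
            case True
            then show ?thesis using cb \<open>t \<in> T\<close> unfolding inT_def by auto
          next
            case False
            then have "inU b'" using ih by auto
            then have "\<forall>s\<in>S - (S - T). co b' s = 0" using T2 unfolding inU_def by simp
            then show ?thesis using split_contra[of "S - T" b' t] b'P \<open>t \<in> T\<close> t orth' T2 bR bb by auto
          qed
        next
          case False
          show ?thesis
          proof (cases "inU b'")
            case True
            have "inU b" unfolding inU_def
            proof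
              fix s assume s: "s \<in> T"
              then have "s \<in> S" "s \<noteq> t" using T(1) \<open>t \<notin> T\<close> by auto
              then show "co b s = 0" using cb True s unfolding inU_def by simp
            qed
            then show ?thesis by simp
          next
            case False2: False
            then have "inT b'" using ih by auto
            then show ?thesis using split_contra[of T b' t] T b'P \<open>t \<notin> T\<close> t orth bR bb
              unfolding inT_def by auto
          qed
        qed
      qed
    qed
  qed
  have ex: "\<exists>n::nat. hgt b \<le> real n" for b by (meson real_nat_ceiling_ge)
  have all: "b \<in> R \<Longrightarrow> inT b \<or> inU b" for b
  proof -
    assume b: "b \<in> R"
    show ?thesis
    proof (cases "b \<in> P")
      case True then show ?thesis using claim ex by blast
    next
      case False
      then have "- b \<in> P" using pos_or_neg b by auto
      then have "inT (- b) \<or> inU (- b)" using claim ex by blast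
      moreover have "s \<in> S \<Longrightarrow> co (- b) s = - co b s" for s by (rule co_neg)
      ultimately show ?thesis using T(1) unfolding inT_def inU_def
        by (metis (no_types, lifting) DiffD1 neg_equal_0_iff_equal subsetD)
    qed
  qed
  define R1 where "R1 = {b \<in> R. inT b}"
  define R2 where "R2 = {b \<in> R. inU b}"
  obtain t0 where t0: "t0 \<in> T" using T by auto
  obtain u0 where u0: "u0 \<in> S - T" using T by auto
  have "t0 \<in> R1" unfolding R1_def inT_def using t0 T SR by (auto simp: co_basis)
  moreover have "u0 \<in> R2" unfolding R2_def inU_def using u0 SR T(1) by (auto simp: co_basis subset_iff)
  moreover have "R1 \<union> R2 = R" unfolding R1_def R2_def using all by auto
  moreover have "R1 \<inter> R2 = {}"
  proof -
    have "b \<in> R \<Longrightarrow> inT b \<Longrightarrow> inU b \<Longrightarrow> False" for b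
    proof -
      assume "b \<in> R" "inT b" "inU b"
      then have "b = 0" using zero_by_co unfolding inT_def inU_def by blast
      then show False using \<open>b \<in> R\<close> nonzero by auto
    qed
    then show ?thesis unfolding R1_def R2_def by auto
  qed
  moreover have "\<forall>a\<in>R1. \<forall>b\<in>R2. a \<bullet> b = 0"
    unfolding R1_def R2_def inT_def inU_def using orth_split[OF T(1) orth] by auto
  ultimately show False using irr unfolding irreducible_rs_def by blast
qed

lemma dom_pos: assumes b: "b \<in> R" and d: "\<forall>t\<in>S. b \<bullet> t \<ge> 0" shows "b \<in> P"
proof (rule ccontr)
  assume "b \<notin> P"
  then have "- b \<in> P" using pos_or_neg b by auto
  then have "(- b) \<bullet> b \<ge> 0" using pos_dom_nonneg d by blast
  then have "b = 0" by (metis inner_minus_left neg_0_le_iff_le inner_gt_zero_iff not_less)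
  then show False using b nonzero by auto
qed

lemma dom_coords: assumes irr: "irreducible_rs R" and b: "b \<in> R" and d: "\<forall>t\<in>S. b \<bullet> t \<ge> 0"
  shows "\<forall>s\<in>S. co b s > 0"
proof (rule ccontr)
  assume nt: "\<not> (\<forall>s\<in>S. co b s > 0)"
  have bP: "b \<in> P" using dom_pos[OF b d] .
  have ge: "\<forall>s\<in>S. co b s \<ge> 0" using bP by (simp add: pos_iff)
  define T where "T = {s \<in> S. co b s \<noteq> 0}"
  have "b \<noteq> 0" using b nonzero by auto
  then have "T \<noteq> {}" unfolding T_def using zero_by_co by blast
  moreover have "S - T \<noteq> {}" unfolding T_def using nt ge by (force simp: order_le_less)
  ultimately obtain t u where t: "t \<in> T" and u: "u \<in> S - T" and tu: "t \<bullet> u \<noteq> 0"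
    using connected[OF irr, of T] unfolding T_def by blast
  have tS: "t \<in> S" and uS: "u \<in> S" and cu: "co b u = 0" and ct: "co b t > 0"
    using t u ge unfolding T_def by (auto simp: order_le_less)
  have tu_ne: "t \<noteq> u" using t u by auto
  have tun: "t \<bullet> u < 0" using simple_pair[OF tS uS tu_ne] tu by simp
  have terms: "\<forall>s\<in>S. co b s * (s \<bullet> u) \<le> 0"
  proof
    fix s assume s: "s \<in> S"
    show "co b s * (s \<bullet> u) \<le> 0"
    proof (cases "s = u")
      case True then show ?thesis using cu by simp
    next
      case False then show ?thesis using simple_pair[OF s uS False] ge s by (simp add: mult_nonneg_nonpos)
    qed
  qed
  have "b \<bullet> u = (\<Sum>s\<in>S. co b s * (s \<bullet> u))" by (rule inner_co)
  also have "\<dots> = co b t * (t \<bullet> u) + (\<Sum>s\<in>S - {t}. co b s * (s \<bullet> u))"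
    using tS finS by (simp add: sum.remove)
  also have "\<dots> < 0" using terms ct tun
    by (intro add_neg_nonpos) (auto intro!: sum_nonpos simp: mult_pos_neg)
  finally show False using d uS by (meson not_less)
qed

lemma dom_unique: assumes irr: "irreducible_rs R" and b: "b \<in> R" and db: "\<forall>t\<in>S. b \<bullet> t \<ge> 0"
  and c: "c \<in> R" and dc: "\<forall>t\<in>S. c \<bullet> t \<ge> 0" and n: "b \<bullet> b = c \<bullet> c"
  shows "b = c"
proof (rule ccontr)
  assume ne: "b \<noteq> c"
  have cb: "\<forall>s\<in>S. co b s > 0" using dom_coords[OF irr b db] .
  have cP: "c \<in> P" using dom_pos[OF c dc] .
  have cc: "c \<bullet> c > 0" using c nonzero by auto
  have "\<exists>s\<in>S. s \<bullet> c > 0"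
  proof (rule ccontr)
    assume "\<not> ?thesis"
    then have "\<forall>s\<in>S. s \<bullet> c \<le> 0" by auto
    then have "(\<Sum>s\<in>S. co c s * (s \<bullet> c)) \<le> 0" using cP
      by (intro sum_nonpos) (auto simp: pos_iff mult_nonneg_nonpos)
    then show False using inner_co[of c c] cc by simp
  qed
  then obtain s where s: "s \<in> S" "s \<bullet> c > 0" by blast
  have nn: "\<forall>t\<in>S. co b t * (t \<bullet> c) \<ge> 0" using cb dc by (auto simp: inner_commute less_imp_le)
  have "co b s * (s \<bullet> c) > 0" using cb s by simp
  also have "co b s * (s \<bullet> c) \<le> (\<Sum>t\<in>S. co b t * (t \<bullet> c))"
    using member_le_sum[of s S "\<lambda>t. co b t * (t \<bullet> c)"] s nn finS by auto
  finally have bc: "b \<bullet> c > 0" using inner_co[of b c] by simp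
  define d where "d = b - c"
  have dR: "d \<in> R" unfolding d_def using diff_root[OF b c bc ne] .
  have d0: "d \<bullet> (b + c) = 0" unfolding d_def using n
    by (simp add: inner_diff_left inner_add_right inner_commute[of c b])
  have key: "e \<in> P \<Longrightarrow> e = d \<or> e = - d \<Longrightarrow> False" for e
  proof -
    assume e: "e \<in> P" "e = d \<or> e = - d"
    have e1: "e \<bullet> b \<ge> 0" using pos_dom_nonneg[OF e(1) db] .
    have e2: "e \<bullet> c \<ge> 0" using pos_dom_nonneg[OF e(1) dc] .
    have "e \<bullet> b + e \<bullet> c = 0" using d0 e(2) by (auto simp: inner_add_right)
    then have "e \<bullet> b = 0" "e \<bullet> c = 0" using e1 e2 by linarith+
    moreover have "e \<bullet> e = e \<bullet> b - e \<bullet> c \<or> e \<bullet> e = e \<bullet> c - e \<bullet> b"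
      using e(2) unfolding d_def by (auto simp: inner_diff_right inner_minus_right)
    ultimately have "e = 0" by auto
    then show False using e PR nonzero by auto
  qed
  show False using pos_or_neg[OF dR] key by blast
qed

end

context RS begin

lemma up_step: assumes short: "\<forall>b\<in>R. \<alpha> \<bullet> \<alpha> \<le> b \<bullet> b"
  and m: "\<mu> \<in> P" and n: "\<mu> \<bullet> \<mu> = \<alpha> \<bullet> \<alpha>" and t: "t \<in> S" and neg: "\<mu> \<bullet> t < 0"
  shows "\<mu> + t \<in> P \<and> (\<mu> + t) \<bullet> (\<mu> + t) = \<alpha> \<bullet> \<alpha> \<and> hgt (\<mu> + t) = hgt \<mu> + 1
     \<and> mq R S lam \<mu> = qq * mq R S lam (\<mu> + t)"
proof -
  have tR: "t \<in> R" using t SR by auto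
  have le: "\<mu> \<bullet> \<mu> \<le> t \<bullet> t" using short tR n by auto
  have r: "refl t \<mu> = \<mu> + t" using cartan_m1[OF m t neg le] .
  have "\<mu> \<noteq> t" using neg by (metis inner_ge_zero not_le)
  then have "refl t \<mu> \<in> P" using refl_pos[OF t m] by auto
  moreover have "refl t \<mu> \<bullet> refl t \<mu> = \<mu> \<bullet> \<mu>" using refl_inner[OF nonzero[OF tR]] .
  ultimately show ?thesis using r n mq_up[OF t r, of lam] t by (simp add: hgt_add hgt_S)
qed

lemma chain: assumes short: "\<forall>b\<in>R. \<alpha> \<bullet> \<alpha> \<le> b \<bullet> b"
  shows "\<forall>\<mu>. \<mu> \<in> P \<longrightarrow> \<mu> \<bullet> \<mu> = \<alpha> \<bullet> \<alpha> \<longrightarrow> Max (hgt ` R) - hgt \<mu> \<le> real n \<longrightarrow>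
    (\<exists>\<beta> k. \<beta> \<in> P \<and> (\<forall>t\<in>S. \<beta> \<bullet> t \<ge> 0) \<and> \<beta> \<bullet> \<beta> = \<alpha> \<bullet> \<alpha> \<and> hgt \<beta> = hgt \<mu> + real k
       \<and> mq R S lam \<mu> = monom 1 k * mq R S lam \<beta>)"
proof (induction n)
  case 0
  show ?case
  proof (intro allI impI)
    fix \<mu> assume m: "\<mu> \<in> P" and n: "\<mu> \<bullet> \<mu> = \<alpha> \<bullet> \<alpha>" and h: "Max (hgt ` R) - hgt \<mu> \<le> real 0"
    show "\<exists>\<beta> k. \<beta> \<in> P \<and> (\<forall>t\<in>S. \<beta> \<bullet> t \<ge> 0) \<and> \<beta> \<bullet> \<beta> = \<alpha> \<bullet> \<alpha> \<and> hgt \<beta> = hgt \<mu> + real k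
       \<and> mq R S lam \<mu> = monom 1 k * mq R S lam \<beta>"
    proof (cases "\<forall>t\<in>S. \<mu> \<bullet> t \<ge> 0")
      case True
      then show ?thesis using m n by (intro exI[of _ \<mu>] exI[of _ 0]) (simp add: one_pCons)
    next
      case False
      then obtain t where t: "t \<in> S" "\<mu> \<bullet> t < 0" by (auto simp: not_le)
      have st: "\<mu> + t \<in> P" "hgt (\<mu> + t) = hgt \<mu> + 1" using up_step[OF short m n t, of lam] by auto
      have "\<mu> + t \<in> R" using st PR by auto
      then have "hgt (\<mu> + t) \<le> Max (hgt ` R)" using finR by (intro Max_ge) auto
      then show ?thesis using st h by simp
    qed
  qed
next
  case (Suc n)
  show ?case
  proof (intro allI impI)
    fix \<mu> assume m: "\<mu> \<in> P" and n: "\<mu> \<bullet> \<mu> = \<alpha> \<bullet> \<alpha>" and h: "Max (hgt ` R) - hgt \<mu> \<le> real (Suc n)"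
    show "\<exists>\<beta> k. \<beta> \<in> P \<and> (\<forall>t\<in>S. \<beta> \<bullet> t \<ge> 0) \<and> \<beta> \<bullet> \<beta> = \<alpha> \<bullet> \<alpha> \<and> hgt \<beta> = hgt \<mu> + real k
       \<and> mq R S lam \<mu> = monom 1 k * mq R S lam \<beta>"
    proof (cases "\<forall>t\<in>S. \<mu> \<bullet> t \<ge> 0")
      case True
      then show ?thesis using m n by (intro exI[of _ \<mu>] exI[of _ 0]) (simp add: one_pCons)
    next
      case False
      then obtain t where t: "t \<in> S" "\<mu> \<bullet> t < 0" by (auto simp: not_le)
      have st: "\<mu> + t \<in> P" "(\<mu> + t) \<bullet> (\<mu> + t) = \<alpha> \<bullet> \<alpha>" "hgt (\<mu> + t) = hgt \<mu> + 1"
        "mq R S lam \<mu> = qq * mq R S lam (\<mu> + t)" using up_step[OF short m n t, of lam] by auto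
      have "Max (hgt ` R) - hgt (\<mu> + t) \<le> real n" using st h by simp
      then obtain \<beta> k where b: "\<beta> \<in> P" "\<forall>t\<in>S. \<beta> \<bullet> t \<ge> 0" "\<beta> \<bullet> \<beta> = \<alpha> \<bullet> \<alpha>"
        "hgt \<beta> = hgt (\<mu> + t) + real k" "mq R S lam (\<mu> + t) = monom 1 k * mq R S lam \<beta>"
        using Suc.IH st by blast
      have "mq R S lam \<mu> = monom 1 (Suc k) * mq R S lam \<beta>"
        using st(4) b(5) by (simp add: mult.assoc[symmetric] mult_monom)
      then show ?thesis using b st by (intro exI[of _ \<beta>] exI[of _ "Suc k"]) auto
    qed
  qed
qed

lemma ht_root: assumes g: "\<gamma> \<in> R" shows "real_of_int (ht S \<gamma>) = hgt \<gamma>"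
proof -
  obtain c :: "'a \<Rightarrow> int" where c: "\<gamma> = (\<Sum>s\<in>S. of_int (c s) *\<^sub>R s)" using root_comb[OF g] by blast
  have cc: "s \<in> S \<Longrightarrow> co \<gamma> s = of_int (c s)" for s by (rule co_unique) (use c in auto)
  have "ht S \<gamma> = (\<Sum>s\<in>S. c s)"
    unfolding ht_def
  proof (rule the_equality)
    show "\<exists>c'. \<gamma> = (\<Sum>s\<in>S. of_int (c' s) *\<^sub>R s) \<and> (\<Sum>s\<in>S. c s) = (\<Sum>s\<in>S. c' s)"
      using c by blast
  next
    fix n assume "\<exists>c'::'a \<Rightarrow> int. \<gamma> = (\<Sum>s\<in>S. of_int (c' s) *\<^sub>R s) \<and> n = (\<Sum>s\<in>S. c' s)"
    then obtain c' :: "'a \<Rightarrow> int" where c': "\<gamma> = (\<Sum>s\<in>S. of_int (c' s) *\<^sub>R s)" "n = (\<Sum>s\<in>S. c' s)" by blast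
    have "s \<in> S \<Longrightarrow> co \<gamma> s = of_int (c' s)" for s by (rule co_unique) (use c' in auto)
    then have "s \<in> S \<Longrightarrow> c' s = c s" for s using cc by force
    then show "n = (\<Sum>s\<in>S. c s)" using c' by simp
  qed
  then show ?thesis unfolding hgt_def using cc by simp
qed

end

theorem mainTheorem11:
  fixes R S :: "'a::euclidean_space set" and \<alpha> \<alpha>p lam :: 'a
  assumes "root_system R" and "irreducible_rs R" and "is_base R S"
    and "\<alpha> \<in> S" and "\<alpha> \<in> short_roots R"
    and "lam \<in> dominant R S" and "lam \<in> root_lattice R"
    and "\<alpha>p \<in> (\<lambda>w. w \<alpha>) ` weyl R" and "\<alpha>p \<in> dominant R S"
  shows "monom 1 1 * mq R S lam \<alpha> = monom 1 (nat (ht S \<alpha>p)) * mq R S lam \<alpha>p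
       \<and> mq R S lam 0 - monom 1 (nat (ht S \<alpha>p)) * mq R S lam \<alpha>p = mq R S lam 0 - monom 1 1 * mq R S lam \<alpha>
       \<and> mq R S lam 0 - monom 1 1 * mq R S lam \<alpha> = monom 1 1 * mq R S lam 0 - mq R S lam (- \<alpha>)"
proof -
  interpret RS R S using assms(1,3) by unfold_locales
  have aS: "\<alpha> \<in> S" by fact
  have short: "\<forall>b\<in>R. \<alpha> \<bullet> \<alpha> \<le> b \<bullet> b" using assms(5) unfolding short_roots_def by auto
  obtain w where w: "w \<in> weyl R" "\<alpha>p = w \<alpha>" using assms(8) by auto
  obtain xs where xs: "set xs \<subseteq> S" "w = wd xs" using weyl_WS[OF w(1)] unfolding WS_def by blast
  have aR: "\<alpha> \<in> R" using aS SR by auto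
  have apR: "\<alpha>p \<in> R" using wd_R[OF xs(1) aR] w xs by simp
  have apn: "\<alpha>p \<bullet> \<alpha>p = \<alpha> \<bullet> \<alpha>" using wd_inner[OF xs(1)] w xs by simp
  have apd: "\<forall>t\<in>S. \<alpha>p \<bullet> t \<ge> 0" using assms(9) unfolding dominant_def by auto
  obtain n :: nat where n: "Max (hgt ` R) - hgt \<alpha> \<le> real n" by (meson real_nat_ceiling_ge)
  obtain \<beta> k where b: "\<beta> \<in> P" "\<forall>t\<in>S. \<beta> \<bullet> t \<ge> 0" "\<beta> \<bullet> \<beta> = \<alpha> \<bullet> \<alpha>" "hgt \<beta> = hgt \<alpha> + real k"
    "mq R S lam \<alpha> = monom 1 k * mq R S lam \<beta>"
    using chain[OF short, of n lam] S_pos[OF aS] n by blast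
  have "\<beta> = \<alpha>p" using dom_unique[OF assms(2) _ b(2) apR apd] b(1,3) apn PR by auto
  have "real_of_int (ht S \<alpha>p) = 1 + real k" using ht_root[OF apR] b(4) \<open>\<beta> = \<alpha>p\<close> hgt_S[OF aS] by simp
  then have "ht S \<alpha>p = 1 + int k" by linarith
  then have htk: "nat (ht S \<alpha>p) = Suc k" by simp
  have c1: "monom 1 1 * mq R S lam \<alpha> = monom 1 (nat (ht S \<alpha>p)) * mq R S lam \<alpha>p"
    using b(5) \<open>\<beta> = \<alpha>p\<close> htk by (simp add: mult.assoc[symmetric] mult_monom)
  have c3: "mq R S lam 0 - monom 1 1 * mq R S lam \<alpha> = monom 1 1 * mq R S lam 0 - mq R S lam (- \<alpha>)"
    using mq_zero[OF aS, of lam] .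
  show ?thesis using c1 c3 by simp
qed


end
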